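(* Let $A,B\subset\mathbb{R}^n$ be set-germs at $0$ with $0\in\overline{A}\cap\overline{B}$, and let $h:(\mathbb{R}^n,0)\to(\mathbb{R}^n,0)$ be a bi-Lipschitz homeomorphism (germ). Suppose that $B$ and $h(B)$ satisfy condition $(SSP)$. Then $D(A)\subset D(B)$ if and only if $D(h(A))\subset D(h(B))$.
   Context: A bi-Lipschitz homeomorphism germ is a homeomorphism between neighbourhoods of $0$ fixing $0$ with $K_1|x-y|\le|h(x)-h(y)|\le K_2|x-y|$ for some $0<K_1\le K_2$ near $0$. Direction set: $D(A)=\{a\in S^{n-1} : \exists\, \{x_i\}\subset A\setminus\{0\},\ x_i\to 0,\ x_i/\|x_i\|\to a\}$. A set-germ $A$ at $0$ with $0\in\overline{A}$ satisfies condition $(SSP)$ if for every sequence $\{a_m\}\subset\mathbb{R}^n$ with $a_m\to 0$ and $\lim_{m\to\infty} a_m/\|a_m\|\in D(A)$, there is a sequence $\{b_m\}\subset A$ with $\|a_m-b_m\|\ll\|a_m\|,\|b_m\|$ (i.e. $\|a_m-b_m\|/\|a_m\|\to0$ and $\|a_m-b_m\|/\|b_m\|\to0$). *)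

theory Defs
  imports "HOL-Analysis.Analysis"
begin

definition direction_set :: "'a::euclidean_space set \<Rightarrow> 'a set" where
  "direction_set A = {a. norm a = 1 \<and>
     (\<exists>x::nat \<Rightarrow> 'a. (\<forall>i. x i \<in> A - {0}) \<and> x \<longlonglongrightarrow> 0 \<and>
        (\<lambda>i. x i /\<^sub>R norm (x i)) \<longlonglongrightarrow> a)}"

definition SSP :: "'a::euclidean_space set \<Rightarrow> bool" where
  "SSP A \<longleftrightarrow> 0 \<in> closure A \<and>
     (\<forall>a::nat \<Rightarrow> 'a. (\<forall>m. a m \<noteq> 0) \<and> a \<longlonglongrightarrow> 0 \<and>
        (\<exists>v \<in> direction_set A. (\<lambda>m. a m /\<^sub>R norm (a m)) \<longlonglongrightarrow> v)
      \<longrightarrow> (\<exists>b::nat \<Rightarrow> 'a. (\<forall>m. b m \<in> A) \<and>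
             (\<lambda>m. norm (a m - b m) / norm (a m)) \<longlonglongrightarrow> 0 \<and>
             (\<lambda>m. norm (a m - b m) / norm (b m)) \<longlonglongrightarrow> 0))"

text \<open>A bi-Lipschitz homeomorphism germ at 0, represented by a map h that is a
  homeomorphism from the open neighbourhood U of 0 onto the open set h ` U,
  fixes 0, and is bi-Lipschitz on some neighbourhood of 0.\<close>
definition bilipschitz_homeo_germ :: "('a::euclidean_space \<Rightarrow> 'a) \<Rightarrow> 'a set \<Rightarrow> bool" where
  "bilipschitz_homeo_germ h U \<longleftrightarrow> open U \<and> 0 \<in> U \<and> h 0 = 0 \<and> open (h ` U) \<and>
     (\<exists>g. homeomorphism U (h ` U) h g) \<and>
     (\<exists>W K1 K2. open W \<and> 0 \<in> W \<and> W \<subseteq> U \<and> 0 < K1 \<and> K1 \<le> K2 \<and>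
        (\<forall>x\<in>W. \<forall>y\<in>W. K1 * dist x y \<le> dist (h x) (h y) \<and> dist (h x) (h y) \<le> K2 * dist x y))"

end

theory Submission
  imports Defs
begin

lemma dir_ineq:
  fixes u w :: "'a::real_normed_vector"
  assumes w: "w \<noteq> 0"
  shows "norm (u /\<^sub>R norm u - w /\<^sub>R norm w) \<le> 2 * norm (u - w) / norm w"
proof (cases "u = 0")
  case True
  then show ?thesis using w by simp
next
  case False
  have nw: "norm w > 0" using w by simp
  have nu: "norm u > 0" using False by simp
  have eq: "u /\<^sub>R norm u - w /\<^sub>R norm w = (u - w) /\<^sub>R norm w + (1 / norm u - 1 / norm w) *\<^sub>R u"
    using nw nu by (simp add: algebra_simps divide_inverse)
  have n1: "norm ((u - w) /\<^sub>R norm w) = norm (u - w) / norm w"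
    using nw by (simp add: divide_inverse mult.commute)
  have "norm ((1 / norm u - 1 / norm w) *\<^sub>R u) = \<bar>1 / norm u - 1 / norm w\<bar> * norm u"
    by simp
  also have "\<dots> = \<bar>norm w - norm u\<bar> / norm w"
    using nw nu by (simp add: field_simps abs_mult abs_divide)
  also have "\<dots> \<le> norm (u - w) / norm w"
    using nw by (intro divide_right_mono) (auto simp: norm_minus_commute intro: order_trans[OF norm_triangle_ineq3])
  finally have n2: "norm ((1 / norm u - 1 / norm w) *\<^sub>R u) \<le> norm (u - w) / norm w" .
  show ?thesis unfolding eq
    using norm_triangle_ineq[of "(u - w) /\<^sub>R norm w" "(1 / norm u - 1 / norm w) *\<^sub>R u"] n1 n2
    by simp
qed

lemma direction_setI_ev:
  assumes "norm v = 1" "eventually (\<lambda>i. z i \<in> A - {0}) sequentially" "z \<longlonglongrightarrow> 0"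
    "(\<lambda>i. z i /\<^sub>R norm (z i)) \<longlonglongrightarrow> v"
  shows "v \<in> direction_set A"
proof -
  obtain N where N: "\<forall>i\<ge>N. z i \<in> A - {0}" using assms(2) eventually_sequentially by auto
  show ?thesis unfolding direction_set_def
    apply (intro CollectI conjI assms(1) exI[of _ "\<lambda>i. z (i+N)"])
    using N LIMSEQ_ignore_initial_segment[OF assms(3), of N]
      LIMSEQ_ignore_initial_segment[OF assms(4), of N] by auto
qed

lemma direction_set_inter:
  assumes "open U" "0 \<in> U"
  shows "direction_set A \<subseteq> direction_set (A \<inter> U)"
proof
  fix v assume "v \<in> direction_set A"
  then obtain x where v1: "norm v = 1" and x: "\<forall>i. x i \<in> A - {0}" "x \<longlonglongrightarrow> 0"
    "(\<lambda>i. x i /\<^sub>R norm (x i)) \<longlonglongrightarrow> v"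
    unfolding direction_set_def by blast
  have "eventually (\<lambda>i. x i \<in> U) sequentially"
    using topological_tendstoD[OF x(2) assms] .
  then have "eventually (\<lambda>i. x i \<in> A \<inter> U - {0}) sequentially"
    by eventually_elim (use x(1) in auto)
  then show "v \<in> direction_set (A \<inter> U)"
    using direction_setI_ev[OF v1 _ x(2) x(3)] by blast
qed

lemma direction_set_mono:
  "A \<subseteq> B \<Longrightarrow> direction_set A \<subseteq> direction_set B"
  unfolding direction_set_def by blast

lemma main_dir:
  fixes f g :: "'a::euclidean_space \<Rightarrow> 'a"
  assumes V: "0 \<in> V" and f0: "f 0 = 0" and hom: "homeomorphism V (f ` V) f g"
    and W: "open W" "0 \<in> W" "W \<subseteq> V" and K: "0 < K1" "K1 \<le> K2"
    and lip: "\<forall>x\<in>W. \<forall>y\<in>W. K1 * dist x y \<le> dist (f x) (f y) \<and> dist (f x) (f y) \<le> K2 * dist x y"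
    and DAB: "direction_set A \<subseteq> direction_set B" and ssp: "SSP B"
  shows "direction_set (f ` (A \<inter> V)) \<subseteq> direction_set (f ` (B \<inter> V))"
proof
  fix v assume "v \<in> direction_set (f ` (A \<inter> V))"
  then obtain y where v1: "norm v = 1" and y: "\<forall>i. y i \<in> f ` (A \<inter> V) - {0}" "y \<longlonglongrightarrow> 0"
    "(\<lambda>i. y i /\<^sub>R norm (y i)) \<longlonglongrightarrow> v"
    unfolding direction_set_def by blast
  define x where "x i = g (y i)" for i
  have gf: "\<forall>u\<in>V. g (f u) = u" using hom by (simp add: homeomorphism_def)
  have fx: "f (x i) = y i" and xA: "x i \<in> A \<inter> V" for i
  proof -
    from y(1) obtain u where "u \<in> A \<inter> V" "y i = f u" by auto
    then show "f (x i) = y i" "x i \<in> A \<inter> V" using gf by (auto simp: x_def)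
  qed
  have xnz: "x i \<noteq> 0" for i using fx[of i] y(1) f0 by auto
  have g0: "g 0 = 0" using gf V f0 by metis
  have contg: "continuous_on (f ` V) g" using hom homeomorphism_def by blast
  have yV: "\<forall>i. y i \<in> f ` V" using y(1) by auto
  have "(g \<circ> y) \<longlonglongrightarrow> g 0"
    using contg[unfolded continuous_on_sequentially, rule_format, of 0 y] yV y(2) V f0 by force
  moreover have "g \<circ> y = x" by (auto simp: x_def)
  ultimately have x0: "x \<longlonglongrightarrow> 0" using g0 by simp
  have "\<forall>i. x i /\<^sub>R norm (x i) \<in> sphere 0 1" using xnz by simp
  then obtain a r where a: "a \<in> sphere 0 1" and r: "strict_mono (r :: nat \<Rightarrow> nat)"
    and ar: "((\<lambda>i. x i /\<^sub>R norm (x i)) \<circ> r) \<longlonglongrightarrow> a"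
    by (rule seq_compactE[OF compact_imp_seq_compact[OF compact_sphere]])
  define x' where "x' = x \<circ> r"
  define y' where "y' = y \<circ> r"
  have x'0: "x' \<longlonglongrightarrow> 0" unfolding x'_def using LIMSEQ_subseq_LIMSEQ[OF x0 r] .
  have "a \<in> direction_set A"
    apply (rule direction_setI_ev[of a x'])
    using a x'0 ar xA xnz by (auto simp: x'_def o_def)
  then have aB: "a \<in> direction_set B" using DAB by blast
  have x'nz: "\<forall>m. x' m \<noteq> 0" using xnz by (simp add: x'_def)
  have x'dir: "\<exists>v\<in>direction_set B. (\<lambda>m. x' m /\<^sub>R norm (x' m)) \<longlonglongrightarrow> v"
    using aB ar by (auto simp: x'_def o_def)
  obtain b where bB: "\<forall>m. b m \<in> B" and rho: "(\<lambda>m. norm (x' m - b m) / norm (x' m)) \<longlonglongrightarrow> 0"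
    using ssp[unfolded SSP_def, THEN conjunct2, rule_format, of x', OF conjI[OF x'nz conjI[OF x'0 x'dir]]]
    by blast
  define \<rho> where "\<rho> m = norm (x' m - b m) / norm (x' m)" for m
  have "\<rho> = (\<lambda>m. norm (x' m - b m) / norm (x' m))" by (simp add: fun_eq_iff \<rho>_def)
  then have rho0: "\<rho> \<longlonglongrightarrow> 0" using rho by simp
  have nx': "norm (x' m) > 0" for m using xnz by (simp add: x'_def)
  have eqn: "norm (x' m - b m) = \<rho> m * norm (x' m)" for m
    using nx'[of m] by (simp add: \<rho>_def)
  have "(\<lambda>m. \<rho> m * norm (x' m)) \<longlonglongrightarrow> 0 * 0"
    by (intro tendsto_mult rho0) (use tendsto_norm_zero_iff x'0 in auto)
  then have "(\<lambda>m. norm (x' m - b m)) \<longlonglongrightarrow> 0" using eqn by simp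
  then have d0: "(\<lambda>m. x' m - b m) \<longlonglongrightarrow> 0" using tendsto_norm_zero_iff by blast
  have "(\<lambda>m. x' m - (x' m - b m)) \<longlonglongrightarrow> 0 - 0" by (intro tendsto_diff x'0 d0)
  then have b0: "b \<longlonglongrightarrow> 0" by simp
  define z where "z m = f (b m)" for m
  have ev: "eventually (\<lambda>m. x' m \<in> W \<and> b m \<in> W \<and> \<rho> m < 1) sequentially"
    using topological_tendstoD[OF x'0 W(1,2)] topological_tendstoD[OF b0 W(1,2)]
      order_tendstoD(2)[OF rho0 zero_less_one]
    by eventually_elim auto
  have props: "b m \<in> B \<inter> V - {0} \<and> z m \<noteq> 0 \<and> norm (z m - y' m) \<le> K2 * norm (x' m - b m)
      \<and> norm (y' m) \<ge> K1 * norm (x' m)"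
    if "x' m \<in> W \<and> b m \<in> W \<and> \<rho> m < 1" for m
  proof -
    have bnz: "b m \<noteq> 0"
    proof
      assume "b m = 0" then have "\<rho> m = 1" using nx'[of m] by (simp add: \<rho>_def)
      then show False using that by simp
    qed
    have bV: "b m \<in> V" using that W(3) by auto
    have znz: "z m \<noteq> 0"
    proof
      assume "z m = 0"
      then have "g (f (b m)) = g 0" by (simp add: z_def)
      then show False using gf bV g0 bnz by simp
    qed
    have fx': "f (x' m) = y' m" by (simp add: x'_def y'_def fx)
    have l1: "dist (f (b m)) (f (x' m)) \<le> K2 * dist (b m) (x' m)" using lip that by blast
    have l2: "K1 * dist (x' m) 0 \<le> dist (f (x' m)) (f 0)" using lip that W(2) by blast
    show ?thesis using bnz bV bB znz l1 l2 fx' f0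
      by (auto simp: z_def dist_norm norm_minus_commute)
  qed
  have ev2: "eventually (\<lambda>m. b m \<in> B \<inter> V - {0} \<and> z m \<noteq> 0 \<and> norm (z m - y' m) \<le> K2 * norm (x' m - b m)
      \<and> norm (y' m) \<ge> K1 * norm (x' m)) sequentially"
    using ev by eventually_elim (use props in blast)
  have y'0: "y' \<longlonglongrightarrow> 0" unfolding y'_def using LIMSEQ_subseq_LIMSEQ[OF y(2) r] .
  have "(\<lambda>m. norm (y' m) + K2 * norm (x' m - b m)) \<longlonglongrightarrow> 0 + K2 * 0"
    by (intro tendsto_add tendsto_mult tendsto_const tendsto_norm_zero y'0 d0)
  then have limA: "(\<lambda>m. norm (y' m) + K2 * norm (x' m - b m)) \<longlonglongrightarrow> 0" by simp
  have evA: "eventually (\<lambda>m. norm (z m) \<le> norm (y' m) + K2 * norm (x' m - b m)) sequentially"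
    using ev2
  proof eventually_elim
    case (elim m)
    then show ?case using norm_triangle_ineq[of "y' m" "z m - y' m"] by simp
  qed
  have z0: "z \<longlonglongrightarrow> 0" by (rule Lim_null_comparison[OF evA limA])
  have "(\<lambda>m. (2 * K2 / K1) * \<rho> m) \<longlonglongrightarrow> (2 * K2 / K1) * 0"
    by (intro tendsto_mult tendsto_const rho0)
  then have lim2: "(\<lambda>m. (2 * K2 / K1) * \<rho> m) \<longlonglongrightarrow> 0" by simp
  have "eventually (\<lambda>m. norm (z m /\<^sub>R norm (z m) - y' m /\<^sub>R norm (y' m)) \<le> (2 * K2 / K1) * \<rho> m) sequentially"
    using ev2
  proof eventually_elim
    case (elim m)
    have ynz: "y' m \<noteq> 0" using y(1) by (simp add: y'_def)
    have ny: "norm (y' m) > 0" using ynz by simp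
    have "norm (z m /\<^sub>R norm (z m) - y' m /\<^sub>R norm (y' m)) \<le> 2 * norm (z m - y' m) / norm (y' m)"
      using dir_ineq[OF ynz] .
    also have "\<dots> \<le> 2 * (K2 * norm (x' m - b m)) / (K1 * norm (x' m))"
      using elim ny K nx'[of m]
      by (intro divide_mono mult_left_mono) (auto intro: mult_pos_pos)
    also have "\<dots> = (2 * K2 / K1) * \<rho> m"
      using K nx'[of m] by (simp add: \<rho>_def field_simps)
    finally show ?case .
  qed
  then have "(\<lambda>m. z m /\<^sub>R norm (z m) - y' m /\<^sub>R norm (y' m)) \<longlonglongrightarrow> 0"
    using lim2 by (rule Lim_null_comparison)
  moreover have "(\<lambda>m. y' m /\<^sub>R norm (y' m)) \<longlonglongrightarrow> v"
    using LIMSEQ_subseq_LIMSEQ[OF y(3) r] by (simp add: y'_def o_def)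
  ultimately have "(\<lambda>m. (z m /\<^sub>R norm (z m) - y' m /\<^sub>R norm (y' m)) + y' m /\<^sub>R norm (y' m)) \<longlonglongrightarrow> 0 + v"
    by (intro tendsto_add)
  then have zl: "(\<lambda>m. z m /\<^sub>R norm (z m)) \<longlonglongrightarrow> v" by simp
  have "eventually (\<lambda>m. z m \<in> f ` (B \<inter> V) - {0}) sequentially"
    using ev2 by eventually_elim (auto simp: z_def)
  then show "v \<in> direction_set (f ` (B \<inter> V))"
    using direction_setI_ev[OF v1 _ z0 zl] by blast
qed

theorem theorem5p9:
  fixes A B :: "'a::euclidean_space set" and h :: "'a \<Rightarrow> 'a" and U :: "'a set"
  assumes "0 \<in> closure A" and "0 \<in> closure B"
    and "bilipschitz_homeo_germ h U"
    and "SSP B" and "SSP (h ` (B \<inter> U))"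
  shows "direction_set A \<subseteq> direction_set B \<longleftrightarrow>
         direction_set (h ` (A \<inter> U)) \<subseteq> direction_set (h ` (B \<inter> U))"
proof -
  note bl = assms(3)[unfolded bilipschitz_homeo_germ_def]
  have U: "open U" "0 \<in> U" and h0: "h 0 = 0" using bl by auto
  obtain g where hom: "homeomorphism U (h ` U) h g" using bl by blast
  obtain W K1 K2 where W: "open W" "0 \<in> W" "W \<subseteq> U" and K: "0 < K1" "K1 \<le> K2"
    and lip: "\<forall>x\<in>W. \<forall>y\<in>W. K1 * dist x y \<le> dist (h x) (h y) \<and> dist (h x) (h y) \<le> K2 * dist x y"
    using bl by blast
  have gh: "\<forall>u\<in>U. g (h u) = u" and hg: "\<forall>v\<in>h ` U. h (g v) = v"
    using hom by (auto simp: homeomorphism_def)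
  have g0: "g 0 = 0" using gh U h0 by metis
  have gU: "g ` (h ` U) = U" using hom by (simp add: homeomorphism_def)
  have hom': "homeomorphism (h ` U) (g ` (h ` U)) g h"
    using homeomorphism_symD[OF hom] gU by simp
  have "openin (top_of_set (h ` U)) (h ` W)"
  proof -
    have "openin (top_of_set U) W" using W by (simp add: openin_subset_trans[OF _ W(3) order_refl] open_subset)
    then show ?thesis by (rule homeomorphism_imp_open_map[OF hom])
  qed
  then have oW': "open (h ` W)"
    using bl openin_open_trans by blast
  have K': "0 < 1 / K2" "1 / K2 \<le> 1 / K1" using K by (auto simp: field_simps)
  have lip': "\<forall>x\<in>h ` W. \<forall>y\<in>h ` W. (1 / K2) * dist x y \<le> dist (g x) (g y) \<and> dist (g x) (g y) \<le> (1 / K1) * dist x y"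
  proof (intro ballI)
    fix x y assume "x \<in> h ` W" "y \<in> h ` W"
    then obtain p q where pq: "p \<in> W" "q \<in> W" "x = h p" "y = h q" by auto
    have gp: "g x = p" "g y = q" using pq W(3) gh by auto
    have l: "K1 * dist p q \<le> dist x y" "dist x y \<le> K2 * dist p q" using lip pq by auto
    show "(1 / K2) * dist x y \<le> dist (g x) (g y) \<and> dist (g x) (g y) \<le> (1 / K1) * dist x y"
      unfolding gp using l K by (auto simp: field_simps)
  qed
  show ?thesis
  proof
    assume "direction_set A \<subseteq> direction_set B"
    then show "direction_set (h ` (A \<inter> U)) \<subseteq> direction_set (h ` (B \<inter> U))"
      by (rule main_dir[OF U(2) h0 hom W K lip _ assms(4)])
  next
    assume H: "direction_set (h ` (A \<inter> U)) \<subseteq> direction_set (h ` (B \<inter> U))"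
    have "direction_set (g ` (h ` (A \<inter> U) \<inter> h ` U)) \<subseteq> direction_set (g ` (h ` (B \<inter> U) \<inter> h ` U))"
      by (rule main_dir[OF _ g0 hom' oW' _ _ K' lip' H assms(5)]) (use U W h0 in auto)
    moreover have "g ` (h ` (A \<inter> U) \<inter> h ` U) = A \<inter> U" "g ` (h ` (B \<inter> U) \<inter> h ` U) = B \<inter> U"
      using gh by (force simp: image_iff)+
    ultimately have "direction_set (A \<inter> U) \<subseteq> direction_set (B \<inter> U)" by simp
    then show "direction_set A \<subseteq> direction_set B"
      using direction_set_inter[OF U, of A] direction_set_mono[of "B \<inter> U" B] by blast
  qed
qed

end
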